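(* Let $\mathbf{G}$ be an $n\times n$ real positive definite matrix that admits a decomposition $\mathbf{G}=\mathbf{D}-\mathbf{V}\mathbf{V}^T$, where $\mathbf{D}$ is an $n\times n$ diagonal matrix and $\mathbf{V}$ is an $n\times k$ real matrix with linearly independent columns. Let $\mathbf{a}^*$ be any minimizer of $f(\mathbf{a})=\mathbf{a}^T\mathbf{G}\mathbf{a}$ over $\mathbf{a}\in\mathbb{Z}^n\setminus\{\mathbf{0}\}$. Then: (a) either $\mathbf{a}^*=\pm\mathbf{u}_i$ for some $i$, or there exists $\mathbf{x}\in\mathbb{R}^k$ such that, elementwise, $$\mathbf{a}^*-\tfrac12\mathbf{1}<\mathbf{D}^{-1}\mathbf{V}\mathbf{x}<\mathbf{a}^*+\tfrac12\mathbf{1},$$ and hence $\mathbf{a}^*=\lfloor\mathbf{D}^{-1}\mathbf{V}\mathbf{x}\rceil$ (componentwise rounding to the nearest integer); (b) $\|\mathbf{a}^*\|\le\sqrt{G_{\min}/\lambda_{\min}}$, where $G_{\min}$ is the smallest diagonal entry of $\mathbf{G}$ and $\lambda_{\min}$ the smallest eigenvalue of $\mathbf{G}$.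
   Context: Such a decomposition is called a $DP^k$ decomposition ($\mathbf{P}=\mathbf{V}\mathbf{V}^T$ is positive semidefinite of rank $k$); since $\mathbf{G}$ is positive definite and $\mathbf{P}$ positive semidefinite, all diagonal entries of $\mathbf{D}$ are strictly positive, so $\mathbf{D}^{-1}$ exists. $\mathbf{1}$ is the all-ones vector, $\mathbf{u}_i$ the $i$-th standard unit vector of $\mathbb{R}^n$, $\|\cdot\|$ the Euclidean norm; vector inequalities are elementwise. *)

theory Defs
  imports "HOL-Analysis.Analysis"
begin

definition pos_def_mat :: "real^'n^'n \<Rightarrow> bool" where
  "pos_def_mat G \<longleftrightarrow> transpose G = G \<and> (\<forall>x. x \<noteq> 0 \<longrightarrow> x \<bullet> (G *v x) > 0)"

definition diagonal_mat :: "real^'n^'n \<Rightarrow> bool" where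
  "diagonal_mat D \<longleftrightarrow> (\<forall>i j. i \<noteq> j \<longrightarrow> D $ i $ j = 0)"

definition lin_indep_cols :: "real^'k^'n \<Rightarrow> bool" where
  "lin_indep_cols V \<longleftrightarrow> (\<forall>x. V *v x = 0 \<longrightarrow> x = 0)"

definition int_vec :: "real^'n \<Rightarrow> bool" where
  "int_vec a \<longleftrightarrow> (\<forall>i. a $ i \<in> \<int>)"

definition real_eigenvalue :: "real^'n^'n \<Rightarrow> real \<Rightarrow> bool" where
  "real_eigenvalue G l \<longleftrightarrow> (\<exists>v. v \<noteq> 0 \<and> G *v v = l *\<^sub>R v)"

definition lambda_min :: "real^'n^'n \<Rightarrow> real" where
  "lambda_min G = Min {l. real_eigenvalue G l}"

definition G_min :: "real^'n^'n \<Rightarrow> real" where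
  "G_min G = Min {G $ i $ i | i. True}"

end

theory Submission
  imports Defs
begin

lemma sym_inner:
  fixes G :: "real^'n^'n"
  assumes "transpose G = G"
  shows "x \<bullet> (G *v y) = y \<bullet> (G *v x)"
proof -
  have "x \<bullet> (G *v y) = (x v* G) \<bullet> y" by (simp add: dot_lmul_matrix)
  also have "\<dots> = (G *v x) \<bullet> y" by (metis assms transpose_matrix_vector)
  finally show ?thesis by (simp add: inner_commute)
qed

lemma quad_gen:
  fixes G :: "real^'n^'n"
  assumes "transpose G = G"
  shows "(x + t *\<^sub>R y) \<bullet> (G *v (x + t *\<^sub>R y)) =
     x \<bullet> (G *v x) + 2*t*(y \<bullet> (G *v x)) + t^2 * (y \<bullet> (G *v y))"
  using sym_inner[OF assms, of x y]
  by (simp add: matrix_vector_right_distrib matrix_vector_mult_scaleR inner_add_left inner_add_right power2_eq_square algebra_simps)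

lemma rayleigh_min:
  fixes G :: "real^'n^'n"
  assumes sym: "transpose G = G"
  shows "\<exists>m v. v \<noteq> 0 \<and> G *v v = m *\<^sub>R v \<and> (\<forall>x. m * (norm x)^2 \<le> x \<bullet> (G *v x))"
proof -
  let ?q = "\<lambda>x. x \<bullet> (G *v x)"
  have cont: "continuous_on (sphere 0 1) ?q"
  proof -
    have "continuous_on (sphere 0 1) (\<lambda>x. G *v x)"
      using linear_continuous_on[OF linear_linear[THEN iffD2, OF matrix_vector_mul_linear]] by blast
    then show ?thesis by (intro continuous_on_inner continuous_on_id)
  qed
  have ne: "sphere (0::real^'n) 1 \<noteq> {}"
  proof -
    have "axis undefined (1::real) \<in> sphere (0::real^'n) 1" by (simp only: mem_sphere_0 norm_axis_1)
    then show ?thesis by blast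
  qed
  obtain x0 where x0: "x0 \<in> sphere 0 1" and mn: "\<And>y. y \<in> sphere 0 1 \<Longrightarrow> ?q x0 \<le> ?q y"
    using continuous_attains_inf[OF compact_sphere ne cont] by blast
  define m where "m = ?q x0"
  have n0: "norm x0 = 1" using x0 by simp
  have lb: "m * (norm x)^2 \<le> ?q x" for x
  proof (cases "x = 0")
    case True then show ?thesis by simp
  next
    case False
    let ?u = "(1/norm x) *\<^sub>R x"
    have "?u \<in> sphere 0 1" using False by simp
    then have "m \<le> ?q ?u" using mn m_def by blast
    also have "?q ?u = ?q x / (norm x)^2"
      by (simp add: matrix_vector_mult_scaleR power2_eq_square)
    finally show ?thesis using False by (simp add: field_simps)
  qed
  define w where "w = G *v x0 - m *\<^sub>R x0"
  have ineq: "0 \<le> 2*t*(y \<bullet> w) + t^2 * (?q y - m * (norm y)^2)" for t y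
  proof -
    have A: "m * (norm (x0 + t *\<^sub>R y))^2 \<le> m + 2*t*(y \<bullet> (G *v x0)) + t^2 * ?q y"
      using lb[of "x0 + t *\<^sub>R y"] quad_gen[OF sym, of x0 t y] m_def by linarith
    have N: "(norm (x0 + t *\<^sub>R y))^2 = 1 + 2*t*(y \<bullet> x0) + t^2 * (norm y)^2"
    proof -
      have a: "x0 \<bullet> x0 = 1" using power2_norm_eq_inner[of x0] n0 by simp
      have b: "y \<bullet> y = (norm y)^2" using power2_norm_eq_inner[of y] by simp
      have "(norm (x0 + t *\<^sub>R y))^2 = (x0 + t *\<^sub>R y) \<bullet> (x0 + t *\<^sub>R y)" by (rule power2_norm_eq_inner)
      also have "\<dots> = x0 \<bullet> x0 + 2*t*(y \<bullet> x0) + t^2 * (y \<bullet> y)"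
        by (simp add: inner_add_left inner_add_right inner_commute power2_eq_square algebra_simps)
      finally show ?thesis by (simp only: a b)
    qed
    have W: "y \<bullet> (G *v x0) = y \<bullet> w + m * (y \<bullet> x0)" by (simp add: w_def inner_diff_right)
    have k: "m * (1 + 2*t*(y \<bullet> x0) + t^2 * (norm y)^2) \<le> m + 2*t*(y \<bullet> w + m * (y \<bullet> x0)) + t^2 * ?q y"
      using A unfolding N W .
    have e1: "m * (1 + 2*t*(y \<bullet> x0) + t^2 * (norm y)^2) = m + m*(2*t*(y \<bullet> x0)) + t^2 * (m * (norm y)^2)"
      by (simp add: algebra_simps)
    have e2: "2*t*(y \<bullet> w + m * (y \<bullet> x0)) = 2*t*(y \<bullet> w) + m*(2*t*(y \<bullet> x0))"
      by (simp add: algebra_simps)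
    have e3: "t^2 * (?q y - m * (norm y)^2) = t^2 * ?q y - t^2 * (m * (norm y)^2)"
      by (simp add: algebra_simps)
    show ?thesis using k e1 e2 e3 by linarith
  qed
  have "w = 0"
  proof (rule ccontr)
    assume "w \<noteq> 0"
    define W where "W = w \<bullet> w"
    define c where "c = ?q w - m * (norm w)^2"
    have W: "W > 0" using \<open>w \<noteq> 0\<close> W_def by simp
    have c: "c \<ge> 0" using lb c_def by simp
    define t where "t = - W / (c + 1)"
    have "0 \<le> 2*t*W + t^2 * c" using ineq[of t w] W_def c_def by simp
    also have "2*t*W + t^2 * c = W^2 * (c - 2*(c+1)) / (c+1)^2"
    proof -
      have c1: "c + 1 \<noteq> 0" using c by simp
      show ?thesis unfolding t_def using c1 by (simp add: divide_simps power2_eq_square) (simp add: algebra_simps)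
    qed
    also have "\<dots> < 0" using W c by (intro divide_neg_pos mult_pos_neg) auto
    finally show False by simp
  qed
  then have "G *v x0 = m *\<^sub>R x0" by (simp add: w_def)
  moreover have "x0 \<noteq> 0" using n0 by auto
  ultimately show ?thesis using lb by blast
qed

lemma eig_finite:
  fixes G :: "real^'n^'n"
  assumes sym: "transpose G = G"
  shows "finite {l. real_eigenvalue G l}"
proof -
  let ?E = "{l. real_eigenvalue G l}"
  define f where "f l = (SOME v. v \<noteq> 0 \<and> G *v v = l *\<^sub>R v)" for l
  have f: "f l \<noteq> 0 \<and> G *v f l = l *\<^sub>R f l" if "l \<in> ?E" for l
    using that unfolding f_def real_eigenvalue_def by (metis (mono_tags, lifting) mem_Collect_eq someI_ex)
  have inj: "inj_on f ?E"
  proof (rule inj_onI)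
    fix l l' assume "l \<in> ?E" "l' \<in> ?E" "f l = f l'"
    then have "l *\<^sub>R f l = l' *\<^sub>R f l" "f l \<noteq> 0" using f by metis+
    then show "l = l'" by (simp add: scaleR_cancel_right)
  qed
  have orth: "pairwise orthogonal (f ` ?E)"
  unfolding pairwise_def
  proof (intro ballI impI)
    fix a b assume "a \<in> f ` ?E" "b \<in> f ` ?E" "a \<noteq> b"
    then obtain l l' where l: "l \<in> ?E" and l': "l' \<in> ?E" and ab: "a = f l" "b = f l'" by blast
    have ne: "f l \<noteq> f l'" using ab \<open>a \<noteq> b\<close> by simp
    then have "l \<noteq> l'" by auto
    have "l * (f l' \<bullet> f l) = f l' \<bullet> (G *v f l)" using f[OF l] by simp
    also have "\<dots> = f l \<bullet> (G *v f l')" by (rule sym_inner[OF sym])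
    also have "\<dots> = l' * (f l \<bullet> f l')" using f[OF l'] by simp
    finally have "(l - l') * (f l \<bullet> f l') = 0" by (simp add: inner_commute algebra_simps)
    then show "orthogonal a b" using ab \<open>l \<noteq> l'\<close> by (simp add: orthogonal_def)
  qed
  have "0 \<notin> f ` ?E" using f by auto
  then have "independent (f ` ?E)" using pairwise_orthogonal_independent orth by blast
  then have "finite (f ` ?E)" using independent_bound by blast
  then show ?thesis using inj finite_imageD by blast
qed

lemma lambda_min_prop:
  fixes G :: "real^'n^'n"
  assumes sym: "transpose G = G"
  shows "\<forall>x. lambda_min G * (norm x)^2 \<le> x \<bullet> (G *v x)"
    and "real_eigenvalue G (lambda_min G)"
proof -
  obtain m v where v: "v \<noteq> 0" "G *v v = m *\<^sub>R v" and lb: "\<forall>x. m * (norm x)^2 \<le> x \<bullet> (G *v x)"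
    using rayleigh_min[OF sym] by (elim exE conjE)
  have mE: "real_eigenvalue G m" using v unfolding real_eigenvalue_def by blast
  have ge: "m \<le> l" if lE: "real_eigenvalue G l" for l
  proof -
    obtain u where u: "u \<noteq> 0" "G *v u = l *\<^sub>R u" using lE unfolding real_eigenvalue_def by (elim exE conjE)
    have "u \<bullet> (G *v u) = l * (norm u)^2" using u(2) by (simp only: inner_scaleR_right dot_square_norm)
    then have "m * (norm u)^2 \<le> l * (norm u)^2" using lb[rule_format, of u] by simp
    moreover have "(norm u)^2 > 0" using u(1) by simp
    ultimately show ?thesis using mult_le_cancel_right_pos by blast
  qed
  have "lambda_min G = m"
    unfolding lambda_min_def
  proof (rule Min_eqI)
    show "finite {l. real_eigenvalue G l}" by (rule eig_finite[OF sym])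
    show "\<And>y. y \<in> {l. real_eigenvalue G l} \<Longrightarrow> m \<le> y" using ge by blast
    show "m \<in> {l. real_eigenvalue G l}" using mE by blast
  qed
  then show "\<forall>x. lambda_min G * (norm x)^2 \<le> x \<bullet> (G *v x)" "real_eigenvalue G (lambda_min G)"
    using lb mE by simp_all
qed

lemma quad_axis:
  fixes G :: "real^'n^'n"
  assumes "transpose G = G"
  shows "(b + t *\<^sub>R axis i 1) \<bullet> (G *v (b + t *\<^sub>R axis i 1)) =
     b \<bullet> (G *v b) + 2*t*(G *v b)$i + t^2 * G$i$i"
proof -
  have e1: "axis i 1 \<bullet> (G *v b) = (G *v b)$i" by (simp add: inner_axis')
  have e2: "b \<bullet> (G *v axis i 1) = (G *v b)$i" using sym_inner[OF assms] e1 by metis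
  have e3: "axis i 1 \<bullet> (G *v axis i 1) = G$i$i" by (simp add: inner_axis' matrix_vector_mult_basis column_def)
  show ?thesis
    by (simp add: matrix_vector_mult_scaleR inner_add_left inner_add_right e1 e2 e3 power2_eq_square algebra_simps)
qed

lemma int_small:
  fixes r :: real
  assumes "r \<in> \<int>" "\<bar>r\<bar> \<le> 1/2"
  shows "r = 0"
proof -
  obtain k where k: "r = of_int k" using assms(1) Ints_cases by blast
  then have "\<bar>real_of_int k\<bar> < 1" using assms(2) by simp
  then have "k = 0" by linarith
  then show ?thesis using k by simp
qed

theorem theorem2:
  fixes G D :: "real^'n^'n" and V :: "real^'k^'n" and a :: "real^'n"
  assumes "pos_def_mat G"
    and "diagonal_mat D"
    and "lin_indep_cols V"
    and "G = D - V ** transpose V"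
    and "int_vec a" and "a \<noteq> 0"
    and "\<forall>b. int_vec b \<and> b \<noteq> 0 \<longrightarrow> a \<bullet> (G *v a) \<le> b \<bullet> (G *v b)"
  shows "((\<exists>i. a = axis i 1 \<or> a = - axis i 1) \<or>
          (\<exists>x :: real^'k.
             (\<forall>i. a $ i - 1/2 < (matrix_inv D *v (V *v x)) $ i \<and>
                  (matrix_inv D *v (V *v x)) $ i < a $ i + 1/2) \<and>
             (\<forall>i. a $ i = of_int (round ((matrix_inv D *v (V *v x)) $ i)))))
         \<and> norm a \<le> sqrt (G_min G / lambda_min G)"
proof -
  have sym: "transpose G = G" and pd: "\<And>x. x \<noteq> 0 \<Longrightarrow> x \<bullet> (G *v x) > 0"
    using assms(1) unfolding pos_def_mat_def by auto
  have minim: "\<And>b. int_vec b \<Longrightarrow> b \<noteq> 0 \<Longrightarrow> a \<bullet> (G *v a) \<le> b \<bullet> (G *v b)"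
    using assms(7) by blast
  have axq: "axis i 1 \<bullet> (G *v axis i 1) = G$i$i" for i
    by (simp add: inner_axis' matrix_vector_mult_basis column_def)
  have Gpos: "G$i$i > 0" for i
    using pd[of "axis i 1"] axq[of i] by (simp add: axis_eq_0_iff)
  have int_axis: "int_vec (axis i (1::real))" for i
    unfolding int_vec_def by (simp add: axis_def)
  have int_ax: "int_vec (a + t *\<^sub>R axis i 1)" if "t \<in> \<int>" for i t
    using assms(5) that unfolding int_vec_def by (simp add: axis_def)
  have partb: "norm a \<le> sqrt (G_min G / lambda_min G)"
  proof -
    have fin: "finite {G $ i $ i | i. True}" by (simp add: full_SetCompr_eq)
    have ne: "{G $ i $ i | i. True} \<noteq> {}" by blast
    obtain j where j: "G_min G = G$j$j"
      using Min_in[OF fin ne] unfolding G_min_def by blast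
    have le1: "a \<bullet> (G *v a) \<le> G$j$j"
      using minim[OF int_axis[of j]] axq[of j] by (simp add: axis_eq_0_iff)
    have lm: "lambda_min G * (norm a)^2 \<le> a \<bullet> (G *v a)"
      using lambda_min_prop(1)[OF sym] by blast
    obtain v where v: "v \<noteq> 0" "G *v v = lambda_min G *\<^sub>R v"
      using lambda_min_prop(2)[OF sym] unfolding real_eigenvalue_def by (elim exE conjE)
    have "v \<bullet> (G *v v) = lambda_min G * (norm v)^2"
      using v(2) by (simp only: inner_scaleR_right dot_square_norm)
    moreover have "v \<bullet> (G *v v) > 0" using pd v(1) by blast
    moreover have "(norm v)^2 > 0" using v(1) by simp
    ultimately have lpos: "lambda_min G > 0" by (metis zero_less_mult_pos2)
    have "lambda_min G * (norm a)^2 \<le> G_min G" using lm le1 j by linarith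
    then have "(norm a)^2 \<le> G_min G / lambda_min G" using lpos by (simp add: field_simps)
    then show ?thesis by (rule real_le_rsqrt)
  qed
  have parta: "(\<exists>i. a = axis i 1 \<or> a = - axis i 1) \<or>
          (\<exists>x :: real^'k.
             (\<forall>i. a $ i - 1/2 < (matrix_inv D *v (V *v x)) $ i \<and>
                  (matrix_inv D *v (V *v x)) $ i < a $ i + 1/2) \<and>
             (\<forall>i. a $ i = of_int (round ((matrix_inv D *v (V *v x)) $ i))))"
  proof (cases "\<exists>i. a = axis i 1 \<or> a = - axis i 1")
    case True then show ?thesis by blast
  next
    case False
    have bnd: "2 * \<bar>(G *v a)$i\<bar> \<le> G$i$i" for i
    proof -
      have n1: "a + 1 *\<^sub>R axis i 1 \<noteq> 0"
      proof
        assume "a + 1 *\<^sub>R axis i 1 = 0"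
        then have "a = - axis i 1" by (simp add: add_eq_0_iff2)
        then show False using False by blast
      qed
      have n2: "a + (-1) *\<^sub>R axis i 1 \<noteq> 0"
      proof
        assume "a + (-1) *\<^sub>R axis i 1 = 0"
        then have "a = axis i 1" by simp
        then show False using False by blast
      qed
      have "a \<bullet> (G *v a) \<le> a \<bullet> (G *v a) + 2*1*(G *v a)$i + 1^2 * G$i$i"
        using minim[OF int_ax n1] quad_axis[OF sym, of a 1 i] by simp
      moreover have "a \<bullet> (G *v a) \<le> a \<bullet> (G *v a) + 2*(-1)*(G *v a)$i + (-1)^2 * G$i$i"
        using minim[OF int_ax n2] quad_axis[OF sym, of a "-1" i] by simp
      ultimately show ?thesis by simp
    qed
    define d where "d i = D$i$i" for i
    define s where "s i = (\<Sum>k\<in>UNIV. V$i$k * V$i$k)" for i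
    have Gent: "G$i$j = D$i$j - (\<Sum>k\<in>UNIV. V$i$k * V$j$k)" for i j
      using assms(4) by (simp add: matrix_matrix_mult_def transpose_def)
    have Ddiag: "D$i$j = (if i = j then d i else 0)" for i j
      using assms(2) unfolding diagonal_mat_def d_def by auto
    have s_nn: "s i \<ge> 0" for i unfolding s_def by (intro sum_nonneg) simp
    have dG: "d i = G$i$i + s i" for i using Gent[of i i] unfolding d_def s_def by simp
    have dpos: "d i > 0" for i using dG[of i] Gpos[of i] s_nn[of i] by linarith
    have dn0: "d i \<noteq> 0" for i using dpos[of i] by simp
    define Di :: "real^'n^'n" where "Di = (\<chi> i j. if i = j then 1 / d i else 0)"
    have DDi: "D ** Di = mat 1"
      unfolding matrix_matrix_mult_def Di_def mat_def
      using dpos by (simp add: dn0 vec_eq_iff Ddiag if_distrib[of "\<lambda>x. x * _"] sum.delta cong: if_cong)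
    have DiD: "Di ** D = mat 1"
      unfolding matrix_matrix_mult_def Di_def mat_def
      using dpos by (simp add: dn0 vec_eq_iff Ddiag if_distrib[of "\<lambda>x. _ * x"] sum.delta cong: if_cong)
    have inv: "matrix_inv D = Di"
    proof -
      have "\<exists>M. D ** M = mat 1 \<and> M ** D = mat 1" using DDi DiD by blast
      then have M: "D ** matrix_inv D = mat 1 \<and> matrix_inv D ** D = mat 1"
        unfolding matrix_inv_def by (rule someI_ex)
      have "matrix_inv D = matrix_inv D ** (D ** Di)" using DDi by (simp add: matrix_mul_rid)
      also have "\<dots> = (matrix_inv D ** D) ** Di" by (simp add: matrix_mul_assoc)
      also have "\<dots> = Di" using M by (simp add: matrix_mul_lid)
      finally show ?thesis .
    qed
    define x where "x = transpose V *v a"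
    have Vx: "V *v x = D *v a - G *v a"
    proof -
      have "V *v x = (V ** transpose V) *v a" unfolding x_def by (rule matrix_vector_mul_assoc)
      also have "V ** transpose V = D - G" using assms(4) by simp
      finally show ?thesis by (simp add: matrix_vector_mult_diff_rdistrib)
    qed
    have Da: "(D *v a)$i = d i * a$i" for i
      by (simp add: matrix_vector_mult_def Ddiag if_distrib[of "\<lambda>x. x * _"] sum.delta cong: if_cong)
    have Diy: "(Di *v y)$i = y$i / d i" for i y
      by (simp add: matrix_vector_mult_def Di_def if_distrib[of "\<lambda>x. x * _"] sum.delta cong: if_cong)
    have c_eq: "(matrix_inv D *v (V *v x))$i = a$i - (G *v a)$i / d i" for i
      using dpos[of i] by (simp add: inv Vx Diy Da field_simps)
    have small: "\<bar>(G *v a)$i / d i\<bar> < 1/2" for i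
    proof (cases "s i > 0")
      case True
      have "2 * \<bar>(G *v a)$i\<bar> < d i" using bnd[of i] dG[of i] True by linarith
      then have "\<bar>(G *v a)$i\<bar> < 1/2 * d i" by linarith
      then have "\<bar>(G *v a)$i\<bar> / d i < 1/2" using dpos[of i] by (simp only: pos_divide_less_eq)
      moreover have "\<bar>(G *v a)$i\<bar> / d i = \<bar>(G *v a)$i / d i\<bar>" using dpos[of i] by (rule abs_div_pos)
      ultimately show ?thesis by simp
    next
      case False
      then have s0: "s i = 0" using s_nn[of i] by linarith
      have "\<forall>k\<in>UNIV. V$i$k * V$i$k = 0"
        using s0 unfolding s_def by (subst sum_nonneg_eq_0_iff[symmetric]) auto
      then have V0: "V$i$k = 0" for k by simp
      have Gij: "G$i$j = 0" if "j \<noteq> i" for j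
        using Gent[of i j] V0 Ddiag[of i j] that by simp
      have "(G *v a)$i = (\<Sum>j\<in>UNIV. if j = i then G$i$i * a$i else 0)"
        unfolding matrix_vector_mult_def vec_lambda_beta by (rule sum.cong) (auto simp: Gij)
      then have Ga: "(G *v a)$i = G$i$i * a$i" by simp
      have "2 * (G$i$i * \<bar>a$i\<bar>) \<le> G$i$i" using bnd[of i] Gpos[of i] by (simp add: Ga abs_mult)
      then have "\<bar>a$i\<bar> \<le> 1/2" using Gpos[of i] by (simp add: field_simps)
      then have "a$i = 0" using assms(5) int_small unfolding int_vec_def by blast
      then show ?thesis by (simp add: Ga)
    qed
    have "(\<forall>i. a $ i - 1/2 < (matrix_inv D *v (V *v x)) $ i \<and>
                  (matrix_inv D *v (V *v x)) $ i < a $ i + 1/2) \<and>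
             (\<forall>i. a $ i = of_int (round ((matrix_inv D *v (V *v x)) $ i)))"
    proof (intro conjI allI)
      fix i
      show "a $ i - 1/2 < (matrix_inv D *v (V *v x)) $ i"
           "(matrix_inv D *v (V *v x)) $ i < a $ i + 1/2"
      proof -
        have "(G *v a)$i / d i < 1/2 \<and> - ((G *v a)$i / d i) < 1/2"
          using small[of i] by (simp only: abs_less_iff)
        then show "a $ i - 1/2 < (matrix_inv D *v (V *v x)) $ i"
           "(matrix_inv D *v (V *v x)) $ i < a $ i + 1/2" unfolding c_eq by linarith+
      qed
      obtain k where k: "a$i = of_int k" using assms(5) unfolding int_vec_def by (metis Ints_cases)
      have "\<bar>(matrix_inv D *v (V *v x)) $ i - of_int k\<bar> < 1/2"
        using small[of i] k unfolding c_eq by simp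
      then have "round ((matrix_inv D *v (V *v x)) $ i) = k" by (rule round_unique')
      then show "a $ i = of_int (round ((matrix_inv D *v (V *v x)) $ i))" using k by simp
    qed
    then show ?thesis by blast
  qed
  show ?thesis using parta partb by blast
qed
end
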